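(* Let $\hat R=\begin{pmatrix}1&0&0&1\\0&1&-1&0\\0&1&1&0\\-1&0&0&1\end{pmatrix}$, $P_{(+)}=\tfrac12\big(I+i(\hat R-I)\big)$, let $a$ be a complex-valued function on a multiplicatively closed set $G\subseteq\mathbb C\setminus\{0\}$, and set $\hat R(x)=I+a(x)P_{(+)}$. Then for all $x,y\in G$, $$\hat R_{(12)}(x)\hat R_{(23)}(xy)\hat R_{(12)}(y)-\hat R_{(23)}(y)\hat R_{(12)}(xy)\hat R_{(23)}(x)=\Big(a(x)+a(y)+a(x)a(y)-a(xy)\big(1-\tfrac12a(x)a(y)\big)\Big)\big(P_{(+)12}-P_{(+)23}\big).$$ Hence $\hat R(x)$ satisfies the parametrised Yang–Baxter equation $\hat R_{(12)}(x)\hat R_{(23)}(xy)\hat R_{(12)}(y)=\hat R_{(23)}(y)\hat R_{(12)}(xy)\hat R_{(23)}(x)$ for all $x,y\in G$ if and only if $a(xy)\big(1-\tfrac12a(x)a(y)\big)=a(x)+a(y)+a(x)a(y)$ for all $x,y\in G$.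
   Context: $I$ is the identity matrix. For a $4\times4$ matrix $A$ acting on $\mathbb C^2\otimes\mathbb C^2$ (basis ordered $e_1\otimes e_1,e_1\otimes e_2,e_2\otimes e_1,e_2\otimes e_2$), $A_{(12)}=A_{12}=A\otimes I_2$ and $A_{(23)}=A_{23}=I_2\otimes A$ acting on $(\mathbb C^2)^{\otimes 3}$. *)

theory Defs
  imports Complex_Main "Jordan_Normal_Form.Matrix"
begin

text \<open>Kronecker (tensor) product of matrices, with the standard index ordering:
  row index i of the product corresponds to (i div dim_row B, i mod dim_row B).
  This matches the basis ordering e1(x)e1, e1(x)e2, e2(x)e1, e2(x)e2.\<close>
definition kron :: "'a::semiring_1 mat \<Rightarrow> 'a mat \<Rightarrow> 'a mat" where
  "kron A B = mat (dim_row A * dim_row B) (dim_col A * dim_col B)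
     (\<lambda>(i,j). A $$ (i div dim_row B, j div dim_col B) * B $$ (i mod dim_row B, j mod dim_col B))"

definition op12 :: "complex mat \<Rightarrow> complex mat" where
  "op12 A = kron A (1\<^sub>m 2)"

definition op23 :: "complex mat \<Rightarrow> complex mat" where
  "op23 A = kron (1\<^sub>m 2) A"

definition Rhat :: "complex mat" where
  "Rhat = mat_of_rows_list 4 [[1,0,0,1],[0,1,-1,0],[0,1,1,0],[-1,0,0,1]]"

definition Pplus :: "complex mat" where
  "Pplus = (1/2) \<cdot>\<^sub>m (1\<^sub>m 4 + \<i> \<cdot>\<^sub>m (Rhat - 1\<^sub>m 4))"

definition Rpar :: "(complex \<Rightarrow> complex) \<Rightarrow> complex \<Rightarrow> complex mat" where
  "Rpar a x = 1\<^sub>m 4 + a x \<cdot>\<^sub>m Pplus"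

end

theory Submission
  imports Defs
begin
lemma less8: "(i::nat) < 8 \<longleftrightarrow> i = 0 \<or> i = 1 \<or> i = 2 \<or> i = 3 \<or> i = 4 \<or> i = 5 \<or> i = 6 \<or> i = 7" by auto

lemma eq8I:
  assumes "dim_row A = 8" "dim_col A = 8" "dim_row B = 8" "dim_col B = 8"
    "\<forall>i\<in>{0,1,2,3,4,5,6,7::nat}. \<forall>j\<in>{0,1,2,3,4,5,6,7::nat}. A $$ (i,j) = B $$ (i,j)"
  shows "A = B"
proof (rule eq_matI)
  fix i j assume "i < dim_row B" "j < dim_col B"
  hence "i \<in> {0,1,2,3,4,5,6,7}" "j \<in> {0,1,2,3,4,5,6,7}" using assms by (auto simp: less8)
  thus "A $$ (i,j) = B $$ (i,j)" using assms(5) by blast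
qed (use assms in auto)

lemma sum8: "sum f {0..<8::nat} = f 0 + f 1 + f 2 + f 3 + f 4 + f 5 + f 6 + f 7"
  by (simp add: eval_nat_numeral atLeast0_lessThan_Suc ac_simps)

lemma gen:
  fixes A B :: "complex mat"
  assumes A: "A \<in> carrier_mat n n" and B: "B \<in> carrier_mat n n"
    and AA: "A * A = A" and BB: "B * B = B"
    and br: "A * (B * A) - B * (A * B) = (1/2) \<cdot>\<^sub>m (A - B)"
  shows "(1\<^sub>m n + x \<cdot>\<^sub>m A) * (1\<^sub>m n + z \<cdot>\<^sub>m B) * (1\<^sub>m n + y \<cdot>\<^sub>m A)
       - (1\<^sub>m n + y \<cdot>\<^sub>m B) * (1\<^sub>m n + z \<cdot>\<^sub>m A) * (1\<^sub>m n + x \<cdot>\<^sub>m B)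
       = (x + y + x * y - z * (1 - x * y / 2)) \<cdot>\<^sub>m (A - B)"
proof -
  have c: "A * B \<in> carrier_mat n n" "B * A \<in> carrier_mat n n"
     "A * (B * A) \<in> carrier_mat n n" "B * (A * B) \<in> carrier_mat n n" using A B by auto
  have br': "(A * (B * A)) $$ (i,j) = (B * (A * B)) $$ (i,j) + (A $$ (i,j) - B $$ (i,j)) / 2"
    if "i < n" "j < n" for i j
  proof -
    have "(A * (B * A) - B * (A * B)) $$ (i,j) = ((1/2) \<cdot>\<^sub>m (A - B)) $$ (i,j)" using br by simp
    thus ?thesis using that A B c by (simp add: field_simps)
  qed
  have d: "dim_row A = n" "dim_col A = n" "dim_row B = n" "dim_col B = n" using A B by auto
  show ?thesis
    using A B c AA BB
    apply (simp add: add_mult_distrib_mat[of _ n n _ _ n] mult_add_distrib_mat[of _ n n _ n] mult_smult_distrib[of _ n n _ n] mult_smult_assoc_mat[of _ n n _ n])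
    apply (rule eq_matI)
    subgoal for i j using br'[of i j] d apply (simp add: field_simps) apply (drule arg_cong[where f="\<lambda>t. x*(y*(z*t))"]) by (simp add: algebra_simps)
    using d by auto
qed

lemma T1: "op12 (Rpar a x) = 1\<^sub>m 8 + a x \<cdot>\<^sub>m op12 Pplus"
  apply (rule eq8I)
  apply (simp_all add: op12_def kron_def Rpar_def Pplus_def Rhat_def mat_of_rows_list_def)
  done

lemma T2: "op23 (Rpar a x) = 1\<^sub>m 8 + a x \<cdot>\<^sub>m op23 Pplus"
  apply (rule eq8I)
  apply (simp_all add: op23_def kron_def Rpar_def Pplus_def Rhat_def mat_of_rows_list_def)
  done


lemma P1e: "op12 Pplus = mat_of_rows_list 8 [[(2/4),0,0,0,0,0,((2/4)*\<i>),0],[0,(2/4),0,0,0,0,0,((2/4)*\<i>)],[0,0,(2/4),0,((-2/4)*\<i>),0,0,0],[0,0,0,(2/4),0,((-2/4)*\<i>),0,0],[0,0,((2/4)*\<i>),0,(2/4),0,0,0],[0,0,0,((2/4)*\<i>),0,(2/4),0,0],[((-2/4)*\<i>),0,0,0,0,0,(2/4),0],[0,((-2/4)*\<i>),0,0,0,0,0,(2/4)]]"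
  apply (rule eq8I)
  apply (simp_all add: op12_def kron_def Pplus_def Rhat_def mat_of_rows_list_def)
  done
lemma P2e: "op23 Pplus = mat_of_rows_list 8 [[(2/4),0,0,((2/4)*\<i>),0,0,0,0],[0,(2/4),((-2/4)*\<i>),0,0,0,0,0],[0,((2/4)*\<i>),(2/4),0,0,0,0,0],[((-2/4)*\<i>),0,0,(2/4),0,0,0,0],[0,0,0,0,(2/4),0,0,((2/4)*\<i>)],[0,0,0,0,0,(2/4),((-2/4)*\<i>),0],[0,0,0,0,0,((2/4)*\<i>),(2/4),0],[0,0,0,0,((-2/4)*\<i>),0,0,(2/4)]]"
  apply (rule eq8I)
  apply (simp_all add: op23_def kron_def Pplus_def Rhat_def mat_of_rows_list_def)
  done

lemma PP11: "mat_of_rows_list 8 [[(2/4),0,0,0,0,0,((2/4)*\<i>),0],[0,(2/4),0,0,0,0,0,((2/4)*\<i>)],[0,0,(2/4),0,((-2/4)*\<i>),0,0,0],[0,0,0,(2/4),0,((-2/4)*\<i>),0,0],[0,0,((2/4)*\<i>),0,(2/4),0,0,0],[0,0,0,((2/4)*\<i>),0,(2/4),0,0],[((-2/4)*\<i>),0,0,0,0,0,(2/4),0],[0,((-2/4)*\<i>),0,0,0,0,0,(2/4)]] * mat_of_rows_list 8 [[(2/4),0,0,0,0,0,((2/4)*\<i>),0],[0,(2/4),0,0,0,0,0,((2/4)*\<i>)],[0,0,(2/4),0,((-2/4)*\<i>),0,0,0],[0,0,0,(2/4),0,((-2/4)*\<i>),0,0],[0,0,((2/4)*\<i>),0,(2/4),0,0,0],[0,0,0,((2/4)*\<i>),0,(2/4),0,0],[((-2/4)*\<i>),0,0,0,0,0,(2/4),0],[0,((-2/4)*\<i>),0,0,0,0,0,(2/4)]]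 = mat_of_rows_list 8 [[(2/4),0,0,0,0,0,((2/4)*\<i>),0],[0,(2/4),0,0,0,0,0,((2/4)*\<i>)],[0,0,(2/4),0,((-2/4)*\<i>),0,0,0],[0,0,0,(2/4),0,((-2/4)*\<i>),0,0],[0,0,((2/4)*\<i>),0,(2/4),0,0,0],[0,0,0,((2/4)*\<i>),0,(2/4),0,0],[((-2/4)*\<i>),0,0,0,0,0,(2/4),0],[0,((-2/4)*\<i>),0,0,0,0,0,(2/4)]]"
  apply (rule eq8I)
  apply (simp_all add: mat_of_rows_list_def scalar_prod_def sum8)
  done

lemma PP22: "mat_of_rows_list 8 [[(2/4),0,0,((2/4)*\<i>),0,0,0,0],[0,(2/4),((-2/4)*\<i>),0,0,0,0,0],[0,((2/4)*\<i>),(2/4),0,0,0,0,0],[((-2/4)*\<i>),0,0,(2/4),0,0,0,0],[0,0,0,0,(2/4),0,0,((2/4)*\<i>)],[0,0,0,0,0,(2/4),((-2/4)*\<i>),0],[0,0,0,0,0,((2/4)*\<i>),(2/4),0],[0,0,0,0,((-2/4)*\<i>),0,0,(2/4)]] * mat_of_rows_list 8 [[(2/4),0,0,((2/4)*\<i>),0,0,0,0],[0,(2/4),((-2/4)*\<i>),0,0,0,0,0],[0,((2/4)*\<i>),(2/4),0,0,0,0,0],[((-2/4)*\<i>),0,0,(2/4),0,0,0,0],[0,0,0,0,(2/4),0,0,((2/4)*\<i>)],[0,0,0,0,0,(2/4),((-2/4)*\<i>),0],[0,0,0,0,0,((2/4)*\<i>),(2/4),0],[0,0,0,0,((-2/4)*\<i>),0,0,(2/4)]]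 = mat_of_rows_list 8 [[(2/4),0,0,((2/4)*\<i>),0,0,0,0],[0,(2/4),((-2/4)*\<i>),0,0,0,0,0],[0,((2/4)*\<i>),(2/4),0,0,0,0,0],[((-2/4)*\<i>),0,0,(2/4),0,0,0,0],[0,0,0,0,(2/4),0,0,((2/4)*\<i>)],[0,0,0,0,0,(2/4),((-2/4)*\<i>),0],[0,0,0,0,0,((2/4)*\<i>),(2/4),0],[0,0,0,0,((-2/4)*\<i>),0,0,(2/4)]]"
  apply (rule eq8I)
  apply (simp_all add: mat_of_rows_list_def scalar_prod_def sum8)
  done

lemma PP21: "mat_of_rows_list 8 [[(2/4),0,0,((2/4)*\<i>),0,0,0,0],[0,(2/4),((-2/4)*\<i>),0,0,0,0,0],[0,((2/4)*\<i>),(2/4),0,0,0,0,0],[((-2/4)*\<i>),0,0,(2/4),0,0,0,0],[0,0,0,0,(2/4),0,0,((2/4)*\<i>)],[0,0,0,0,0,(2/4),((-2/4)*\<i>),0],[0,0,0,0,0,((2/4)*\<i>),(2/4),0],[0,0,0,0,((-2/4)*\<i>),0,0,(2/4)]] * mat_of_rows_list 8 [[(2/4),0,0,0,0,0,((2/4)*\<i>),0],[0,(2/4),0,0,0,0,0,((2/4)*\<i>)],[0,0,(2/4),0,((-2/4)*\<i>),0,0,0],[0,0,0,(2/4),0,((-2/4)*\<i>),0,0],[0,0,((2/4)*\<i>),0,(2/4),0,0,0],[0,0,0,((2/4)*\<i>),0,(2/4),0,0],[((-2/4)*\<i>),0,0,0,0,0,(2/4),0],[0,((-2/4)*\<i>),0,0,0,0,0,(2/4)]]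 = mat_of_rows_list 8 [[(1/4),0,0,((1/4)*\<i>),0,(1/4),((1/4)*\<i>),0],[0,(1/4),((-1/4)*\<i>),0,(-1/4),0,0,((1/4)*\<i>)],[0,((1/4)*\<i>),(1/4),0,((-1/4)*\<i>),0,0,(-1/4)],[((-1/4)*\<i>),0,0,(1/4),0,((-1/4)*\<i>),(1/4),0],[0,(1/4),((1/4)*\<i>),0,(1/4),0,0,((1/4)*\<i>)],[(-1/4),0,0,((1/4)*\<i>),0,(1/4),((-1/4)*\<i>),0],[((-1/4)*\<i>),0,0,(-1/4),0,((1/4)*\<i>),(1/4),0],[0,((-1/4)*\<i>),(1/4),0,((-1/4)*\<i>),0,0,(1/4)]]"
  apply (rule eq8I)
  apply (simp_all add: mat_of_rows_list_def scalar_prod_def sum8)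
  done

lemma PP12: "mat_of_rows_list 8 [[(2/4),0,0,0,0,0,((2/4)*\<i>),0],[0,(2/4),0,0,0,0,0,((2/4)*\<i>)],[0,0,(2/4),0,((-2/4)*\<i>),0,0,0],[0,0,0,(2/4),0,((-2/4)*\<i>),0,0],[0,0,((2/4)*\<i>),0,(2/4),0,0,0],[0,0,0,((2/4)*\<i>),0,(2/4),0,0],[((-2/4)*\<i>),0,0,0,0,0,(2/4),0],[0,((-2/4)*\<i>),0,0,0,0,0,(2/4)]] * mat_of_rows_list 8 [[(2/4),0,0,((2/4)*\<i>),0,0,0,0],[0,(2/4),((-2/4)*\<i>),0,0,0,0,0],[0,((2/4)*\<i>),(2/4),0,0,0,0,0],[((-2/4)*\<i>),0,0,(2/4),0,0,0,0],[0,0,0,0,(2/4),0,0,((2/4)*\<i>)],[0,0,0,0,0,(2/4),((-2/4)*\<i>),0],[0,0,0,0,0,((2/4)*\<i>),(2/4),0],[0,0,0,0,((-2/4)*\<i>),0,0,(2/4)]] = mat_of_rows_list 8 [[(1/4),0,0,((1/4)*\<i>),0,(-1/4),((1/4)*\<i>),0],[0,(1/4),((-1/4)*\<i>),0,(1/4),0,0,((1/4)*\<i>)],[0,((1/4)*\<i>),(1/4),0,((-1/4)*\<i>),0,0,(1/4)],[((-1/4)*\<i>),0,0,(1/4),0,((-1/4)*\<i>),(-1/4),0],[0,(-1/4),((1/4)*\<i>),0,(1/4),0,0,((1/4)*\<i>)],[(1/4),0,0,((1/4)*\<i>),0,(1/4),((-1/4)*\<i>),0],[((-1/4)*\<i>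),0,0,(1/4),0,((1/4)*\<i>),(1/4),0],[0,((-1/4)*\<i>),(-1/4),0,((-1/4)*\<i>),0,0,(1/4)]]"
  apply (rule eq8I)
  apply (simp_all add: mat_of_rows_list_def scalar_prod_def sum8)
  done

lemma PP121: "mat_of_rows_list 8 [[(2/4),0,0,0,0,0,((2/4)*\<i>),0],[0,(2/4),0,0,0,0,0,((2/4)*\<i>)],[0,0,(2/4),0,((-2/4)*\<i>),0,0,0],[0,0,0,(2/4),0,((-2/4)*\<i>),0,0],[0,0,((2/4)*\<i>),0,(2/4),0,0,0],[0,0,0,((2/4)*\<i>),0,(2/4),0,0],[((-2/4)*\<i>),0,0,0,0,0,(2/4),0],[0,((-2/4)*\<i>),0,0,0,0,0,(2/4)]] * mat_of_rows_list 8 [[(1/4),0,0,((1/4)*\<i>),0,(1/4),((1/4)*\<i>),0],[0,(1/4),((-1/4)*\<i>),0,(-1/4),0,0,((1/4)*\<i>)],[0,((1/4)*\<i>),(1/4),0,((-1/4)*\<i>),0,0,(-1/4)],[((-1/4)*\<i>),0,0,(1/4),0,((-1/4)*\<i>),(1/4),0],[0,(1/4),((1/4)*\<i>),0,(1/4),0,0,((1/4)*\<i>)],[(-1/4),0,0,((1/4)*\<i>),0,(1/4),((-1/4)*\<i>),0],[((-1/4)*\<i>),0,0,(-1/4),0,((1/4)*\<i>),(1/4),0],[0,((-1/4)*\<i>),(1/4),0,((-1/4)*\<i>),0,0,(1/4)]] = mat_of_rows_list 8 [[(1/4),0,0,0,0,0,((1/4)*\<i>),0],[0,(1/4),0,0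,0,0,0,((1/4)*\<i>)],[0,0,(1/4),0,((-1/4)*\<i>),0,0,0],[0,0,0,(1/4),0,((-1/4)*\<i>),0,0],[0,0,((1/4)*\<i>),0,(1/4),0,0,0],[0,0,0,((1/4)*\<i>),0,(1/4),0,0],[((-1/4)*\<i>),0,0,0,0,0,(1/4),0],[0,((-1/4)*\<i>),0,0,0,0,0,(1/4)]]"
  apply (rule eq8I)
  apply (simp_all add: mat_of_rows_list_def scalar_prod_def sum8)
  done

lemma PP212: "mat_of_rows_list 8 [[(2/4),0,0,((2/4)*\<i>),0,0,0,0],[0,(2/4),((-2/4)*\<i>),0,0,0,0,0],[0,((2/4)*\<i>),(2/4),0,0,0,0,0],[((-2/4)*\<i>),0,0,(2/4),0,0,0,0],[0,0,0,0,(2/4),0,0,((2/4)*\<i>)],[0,0,0,0,0,(2/4),((-2/4)*\<i>),0],[0,0,0,0,0,((2/4)*\<i>),(2/4),0],[0,0,0,0,((-2/4)*\<i>),0,0,(2/4)]] * mat_of_rows_list 8 [[(1/4),0,0,((1/4)*\<i>),0,(-1/4),((1/4)*\<i>),0],[0,(1/4),((-1/4)*\<i>),0,(1/4),0,0,((1/4)*\<i>)],[0,((1/4)*\<i>),(1/4),0,((-1/4)*\<i>),0,0,(1/4)],[((-1/4)*\<i>),0,0,(1/4),0,((-1/4)*\<i>),(-1/4),0],[0,(-1/4),((1/4)*\<i>),0,(1/4),0,0,((1/4)*\<i>)],[(1/4),0,0,((1/4)*\<i>),0,(1/4),((-1/4)*\<i>),0],[((-1/4)*\<i>),0,0,(1/4),0,((1/4)*\<i>),(1/4),0],[0,((-1/4)*\<i>),(-1/4),0,((-1/4)*\<i>),0,0,(1/4)]]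 = mat_of_rows_list 8 [[(1/4),0,0,((1/4)*\<i>),0,0,0,0],[0,(1/4),((-1/4)*\<i>),0,0,0,0,0],[0,((1/4)*\<i>),(1/4),0,0,0,0,0],[((-1/4)*\<i>),0,0,(1/4),0,0,0,0],[0,0,0,0,(1/4),0,0,((1/4)*\<i>)],[0,0,0,0,0,(1/4),((-1/4)*\<i>),0],[0,0,0,0,0,((1/4)*\<i>),(1/4),0],[0,0,0,0,((-1/4)*\<i>),0,0,(1/4)]]"
  apply (rule eq8I)
  apply (simp_all add: mat_of_rows_list_def scalar_prod_def sum8)
  done

lemma Pbr: "mat_of_rows_list 8 [[(1/4),0,0,0,0,0,((1/4)*\<i>),0],[0,(1/4),0,0,0,0,0,((1/4)*\<i>)],[0,0,(1/4),0,((-1/4)*\<i>),0,0,0],[0,0,0,(1/4),0,((-1/4)*\<i>),0,0],[0,0,((1/4)*\<i>),0,(1/4),0,0,0],[0,0,0,((1/4)*\<i>),0,(1/4),0,0],[((-1/4)*\<i>),0,0,0,0,0,(1/4),0],[0,((-1/4)*\<i>),0,0,0,0,0,(1/4)]] - mat_of_rows_list 8 [[(1/4),0,0,((1/4)*\<i>),0,0,0,0],[0,(1/4),((-1/4)*\<i>),0,0,0,0,0],[0,((1/4)*\<i>),(1/4),0,0,0,0,0],[((-1/4)*\<i>),0,0,(1/4),0,0,0,0],[0,0,0,0,(1/4),0,0,((1/4)*\<i>)],[0,0,0,0,0,(1/4),((-1/4)*\<i>),0],[0,0,0,0,0,((1/4)*\<i>),(1/4),0],[0,0,0,0,((-1/4)*\<i>),0,0,(1/4)]]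 = (1/2) \<cdot>\<^sub>m (mat_of_rows_list 8 [[(2/4),0,0,0,0,0,((2/4)*\<i>),0],[0,(2/4),0,0,0,0,0,((2/4)*\<i>)],[0,0,(2/4),0,((-2/4)*\<i>),0,0,0],[0,0,0,(2/4),0,((-2/4)*\<i>),0,0],[0,0,((2/4)*\<i>),0,(2/4),0,0,0],[0,0,0,((2/4)*\<i>),0,(2/4),0,0],[((-2/4)*\<i>),0,0,0,0,0,(2/4),0],[0,((-2/4)*\<i>),0,0,0,0,0,(2/4)]] - mat_of_rows_list 8 [[(2/4),0,0,((2/4)*\<i>),0,0,0,0],[0,(2/4),((-2/4)*\<i>),0,0,0,0,0],[0,((2/4)*\<i>),(2/4),0,0,0,0,0],[((-2/4)*\<i>),0,0,(2/4),0,0,0,0],[0,0,0,0,(2/4),0,0,((2/4)*\<i>)],[0,0,0,0,0,(2/4),((-2/4)*\<i>),0],[0,0,0,0,0,((2/4)*\<i>),(2/4),0],[0,0,0,0,((-2/4)*\<i>),0,0,(2/4)]])"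
  apply (rule eq8I)
  apply (simp_all add: mat_of_rows_list_def)
  done
lemma Pplus_dim[simp]: "dim_row Pplus = 4" "dim_col Pplus = 4"
  by (simp_all add: Pplus_def Rhat_def mat_of_rows_list_def)

lemma Rpar_dim[simp]: "dim_row (Rpar a x) = 4" "dim_col (Rpar a x) = 4"
  by (simp_all add: Rpar_def)

lemma op_dims2[simp]: "dim_row (op12 A) = dim_row A * 2" "dim_col (op12 A) = dim_col A * 2"
  "dim_row (op23 A) = 2 * dim_row A" "dim_col (op23 A) = 2 * dim_col A"
  by (simp_all add: op12_def op23_def kron_def)

lemma key: "op12 (Rpar a x) * op23 (Rpar a z) * op12 (Rpar a y)
          - op23 (Rpar a y) * op12 (Rpar a z) * op23 (Rpar a x)
          = (a x + a y + a x * a y - a z * (1 - a x * a y / 2))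
              \<cdot>\<^sub>m (op12 Pplus - op23 Pplus)"
  unfolding T1 T2
proof (rule gen)
  show "op12 Pplus \<in> carrier_mat 8 8" "op23 Pplus \<in> carrier_mat 8 8" by auto
  show "op12 Pplus * op12 Pplus = op12 Pplus" unfolding P1e by (rule PP11)
  show "op23 Pplus * op23 Pplus = op23 Pplus" unfolding P2e by (rule PP22)
  show "op12 Pplus * (op23 Pplus * op12 Pplus) - op23 Pplus * (op12 Pplus * op23 Pplus) =
    (1/2) \<cdot>\<^sub>m (op12 Pplus - op23 Pplus)"
    unfolding P1e P2e PP21 PP12 PP121 PP212 by (rule Pbr)
qed

theorem mainTheorem4:
  fixes G :: "complex set" and a :: "complex \<Rightarrow> complex"
  assumes "0 \<notin> G"
    and "\<And>x y. x \<in> G \<Longrightarrow> y \<in> G \<Longrightarrow> x * y \<in> G"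
  shows "(\<forall>x\<in>G. \<forall>y\<in>G.
            op12 (Rpar a x) * op23 (Rpar a (x*y)) * op12 (Rpar a y)
          - op23 (Rpar a y) * op12 (Rpar a (x*y)) * op23 (Rpar a x)
          = (a x + a y + a x * a y - a (x*y) * (1 - a x * a y / 2))
              \<cdot>\<^sub>m (op12 Pplus - op23 Pplus))
       \<and> ((\<forall>x\<in>G. \<forall>y\<in>G.
            op12 (Rpar a x) * op23 (Rpar a (x*y)) * op12 (Rpar a y)
          = op23 (Rpar a y) * op12 (Rpar a (x*y)) * op23 (Rpar a x))
         \<longleftrightarrow> (\<forall>x\<in>G. \<forall>y\<in>G.
            a (x*y) * (1 - a x * a y / 2) = a x + a y + a x * a y))"
proof -
  let ?A = "\<lambda>x y z. op12 (Rpar a x) * op23 (Rpar a z) * op12 (Rpar a y)"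
  let ?B = "\<lambda>x y z. op23 (Rpar a y) * op12 (Rpar a z) * op23 (Rpar a x)"
  let ?M = "op12 Pplus - op23 Pplus"
  have M06: "?M $$ (0,6) = \<i>/2"
    by (simp add: op12_def op23_def kron_def Pplus_def Rhat_def mat_of_rows_list_def)
  have dA: "dim_row (?A x y z) = 8 \<and> dim_col (?A x y z) = 8 \<and> dim_row (?B x y z) = 8 \<and> dim_col (?B x y z) = 8" for x y z
    by simp
  have iff: "?A x y z = ?B x y z \<longleftrightarrow> a z * (1 - a x * a y / 2) = a x + a y + a x * a y" for x y z
  proof
    assume "?A x y z = ?B x y z"
    hence "(?A x y z - ?B x y z) $$ (0,6) = 0" using dA[of x y z] by simp
    hence "((a x + a y + a x * a y - a z * (1 - a x * a y / 2)) \<cdot>\<^sub>m ?M) $$ (0,6) = 0"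
      by (simp only: key)
    moreover have "((a x + a y + a x * a y - a z * (1 - a x * a y / 2)) \<cdot>\<^sub>m ?M) $$ (0,6)
       = (a x + a y + a x * a y - a z * (1 - a x * a y / 2)) * ?M $$ (0,6)"
      by (rule index_smult_mat) simp_all
    ultimately have "(a x + a y + a x * a y - a z * (1 - a x * a y / 2)) * (\<i>/2) = 0"
      using M06 by simp
    thus "a z * (1 - a x * a y / 2) = a x + a y + a x * a y" by simp
  next
    assume h: "a z * (1 - a x * a y / 2) = a x + a y + a x * a y"
    show "?A x y z = ?B x y z"
    proof (rule eq_matI)
      fix i j assume ij: "i < dim_row (?B x y z)" "j < dim_col (?B x y z)"
      have "(?A x y z - ?B x y z) $$ (i,j) = 0"
        using ij h by (simp only: key) (simp add: op12_def op23_def kron_def)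
      thus "?A x y z $$ (i,j) = ?B x y z $$ (i,j)" using ij dA[of x y z] by simp
    qed (use dA in auto)
  qed
  show ?thesis using key iff by blast
qed

end
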